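(* Let $\omega\colon\mathbf Z_+\to(0,+\infty)$ be a weight which is bounded from below and such that $\mathcal T$ is a bounded operator on $\mathcal X_\omega$. Then the adjoint $\mathcal T^*$ of $\mathcal T$ on $\mathcal X_\omega$ has no eigenvalues: $\sigma_p(\mathcal T^* )=\emptyset$. In particular this holds for $\omega=\omega_0$, $\omega_0(n)=(n+1)/\pi$.
   Context: $T\colon\mathbf Z_+\to\mathbf Z_+$ is the modified Collatz map: $T(n)=n/2$ for $n$ even, $T(n)=(3n+1)/2$ for $n$ odd. $\mathcal X_\omega$ is the Hilbert space of holomorphic functions $f(z)=\sum_{n\ge3}c_nz^n$ on the unit disk with $\|f\|_\omega^2=\sum_{n\ge3}|c_n|^2/\omega(n)<\infty$ and inner product $\langle f,g\rangle=\sum_{n\ge3}c_n(f)\overline{c_n(g)}/\omega(n)$. $\mathcal T\sum_{n\ge3}c_nz^n=\sum_{j\ge3,\,T(j)\ge3}c_jz^{T(j)}$. $\mathcal T$ is bounded on $\mathcal X_\omega$ iff the sequences $\omega(6m)/\omega(3m)$, $\omega(6m+2)/\omega(3m+1)$, $(\omega(6m+4)+\omega(2m+1))/\omega(3m+2)$ ($m\ge1$) are bounded; this holds for $\omega_0$. $\sigma_p$ denotes the point spectrum (set of eigenvalues). *)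

theory Defs
  imports "HOL-Analysis.Analysis"
begin

definition collatzT :: "nat \<Rightarrow> nat" where
  "collatzT n = (if even n then n div 2 else (3 * n + 1) div 2)"

text \<open>An element f(z) = sum_{n>=3} c_n z^n of X_omega is represented by its
  coefficient sequence c :: nat => complex (with c n = 0 for n < 3).\<close>
definition Xw :: "(nat \<Rightarrow> real) \<Rightarrow> (nat \<Rightarrow> complex) set" where
  "Xw \<omega> = {c. (\<forall>n<3. c n = 0) \<and> summable (\<lambda>n. (cmod (c n))\<^sup>2 / \<omega> n)}"

definition wnorm :: "(nat \<Rightarrow> real) \<Rightarrow> (nat \<Rightarrow> complex) \<Rightarrow> real" where
  "wnorm \<omega> c = sqrt (\<Sum>n. (cmod (c n))\<^sup>2 / \<omega> n)"

definition winner :: "(nat \<Rightarrow> real) \<Rightarrow> (nat \<Rightarrow> complex) \<Rightarrow> (nat \<Rightarrow> complex) \<Rightarrow> complex" where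
  "winner \<omega> f g = (\<Sum>n. f n * cnj (g n) / complex_of_real (\<omega> n))"

definition Top :: "(nat \<Rightarrow> complex) \<Rightarrow> (nat \<Rightarrow> complex)" where
  "Top c k = (if 3 \<le> k then (\<Sum>j\<in>{j. 3 \<le> j \<and> collatzT j = k}. c j) else 0)"

definition Top_bounded :: "(nat \<Rightarrow> real) \<Rightarrow> bool" where
  "Top_bounded \<omega> \<longleftrightarrow> (\<exists>C. \<forall>c\<in>Xw \<omega>. Top c \<in> Xw \<omega> \<and> wnorm \<omega> (Top c) \<le> C * wnorm \<omega> c)"

definition Tadj :: "(nat \<Rightarrow> real) \<Rightarrow> (nat \<Rightarrow> complex) \<Rightarrow> (nat \<Rightarrow> complex)" where
  "Tadj \<omega> g = (THE h. h \<in> Xw \<omega> \<and> (\<forall>f\<in>Xw \<omega>. winner \<omega> (Top f) g = winner \<omega> f h))"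

definition point_spectrum_Tadj :: "(nat \<Rightarrow> real) \<Rightarrow> complex set" where
  "point_spectrum_Tadj \<omega> =
     {\<mu>. \<exists>g\<in>Xw \<omega>. g \<noteq> (\<lambda>_. 0) \<and> Tadj \<omega> g = (\<lambda>n. \<mu> * g n)}"

definition omega0 :: "nat \<Rightarrow> real" where
  "omega0 n = (real n + 1) / pi"

end

theory Submission
  imports Defs
begin


lemma T2: "collatzT (2*k) = k" by (simp add: collatzT_def)
lemma Todd: "collatzT (2*m+1) = 3*m+2" by (simp add: collatzT_def)
lemma Tsmall: "i < 3 \<Longrightarrow> collatzT i < 3"
  by (cases i; cases "i - 1"; simp add: collatzT_def)
lemma Tpos: "1 \<le> i \<Longrightarrow> 1 \<le> collatzT i"
  by (auto simp add: collatzT_def)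
lemma Tpow_pos: "1 \<le> i \<Longrightarrow> 1 \<le> (collatzT ^^ n) i"
proof (induction n)
  case (Suc n) then have "1 \<le> (collatzT ^^ n) i" by simp
  then show ?case using Tpos by simp
qed simp
lemma Tbig: "j \<le> 2 * collatzT j + 1"
  by (auto simp add: collatzT_def)

lemma fiber_fin: "finite {j. 3 \<le> j \<and> collatzT j = k}"
  by (rule finite_subset[of _ "{..2*k+1}"]) (use Tbig in force)+

lemma fiber: assumes "3 \<le> k"
  shows "{j. 3 \<le> j \<and> collatzT j = k} = insert (2*k) (if k mod 3 = 2 then {2*(k div 3)+1} else {})"
proof -
  have "collatzT j = k \<longleftrightarrow> j = 2*k \<or> (k mod 3 = 2 \<and> j = 2*(k div 3)+1)" for j
  proof (cases "even j")
    case True then show ?thesis by (auto simp: collatzT_def)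
  next
    case False
    then obtain m where m: "j = 2*m+1" by (metis oddE)
    have "3*m+2 = k \<longleftrightarrow> (k mod 3 = 2 \<and> m = k div 3)"
    proof
      assume "3*m+2 = k" then show "k mod 3 = 2 \<and> m = k div 3" by presburger
    next
      assume h: "k mod 3 = 2 \<and> m = k div 3"
      have "k = 3*(k div 3) + k mod 3" by simp
      then show "3*m+2 = k" using h by simp
    qed
    moreover have "2*m+1 \<noteq> 2*k" by presburger
    ultimately show ?thesis unfolding m Todd by auto
  qed
  then show ?thesis using assms by auto
qed

lemma Top_eq: assumes "3 \<le> k"
  shows "Top f k = f (2*k) + (if k mod 3 = 2 then f (2*(k div 3)+1) else 0)"
proof -
  have "2*k \<noteq> 2*(k div 3)+1" by presburger
  then show ?thesis unfolding Top_def using assms by (simp add: fiber)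
qed

lemma Top_unit: "Top (\<lambda>n. if n = j then 1 else 0) k = (if 3 \<le> k \<and> 3 \<le> j \<and> collatzT j = k then 1 else 0)"
  unfolding Top_def using fiber_fin[of k] by (auto simp: sum.delta)

lemma subseq_summable:
  fixes a :: "nat \<Rightarrow> real"
  assumes "summable a" "\<And>n. 0 \<le> a n" "strict_mono h"
  shows "summable (\<lambda>n. a (h n))"
proof -
  define a' where "a' n = (if n \<in> range h then a n else 0)" for n
  have "summable a'"
    by (rule summable_comparison_test[OF _ assms(1)]) (auto simp: a'_def assms(2))
  then have "summable (\<lambda>n. a' (h n))"
    by (subst summable_mono_reindex[OF assms(3)]) (auto simp: a'_def)
  then show ?thesis by (simp add: a'_def)
qed

lemma even_odd_sums:
  fixes u v :: "nat \<Rightarrow> 'a::real_normed_vector"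
  assumes "u sums a" "v sums b"
  shows "(\<lambda>j. if even j then u (j div 2) else v (j div 2)) sums (a + b)"
proof -
  have sm2: "strict_mono (\<lambda>m::nat. 2*m)" by (auto intro: strict_monoI)
  have sm3: "strict_mono (\<lambda>m::nat. 2*m+1)" by (auto intro: strict_monoI)
  have z1: "n \<notin> range (\<lambda>m::nat. 2*m) \<Longrightarrow> (if even n then u (n div 2) else 0) = 0" for n
    by (auto elim!: evenE)
  define F where "F j = (if even j then u (j div 2) else 0)" for j
  define G where "G j = (if odd j then v (j div 2) else 0)" for j
  have e1: "(\<lambda>n. F (2*n)) sums a \<longleftrightarrow> F sums a"
    by (rule sums_mono_reindex[OF sm2]) (use z1 in \<open>simp add: F_def\<close>)
  have z2: "n \<notin> range (\<lambda>m::nat. 2*m+1) \<Longrightarrow> (if odd n then v (n div 2) else 0) = 0" for n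
    by (auto elim!: oddE)
  have e2: "(\<lambda>n. G (2*n+1)) sums b \<longleftrightarrow> G sums b"
    by (rule sums_mono_reindex[OF sm3]) (use z2 in \<open>simp add: G_def\<close>)
  have 1: "F sums a" using e1 assms(1) by (simp add: F_def)
  have 2: "G sums b" using e2 assms(2) by (simp add: G_def)
  have "(\<lambda>j. F j + G j) = (\<lambda>j. if even j then u (j div 2) else v (j div 2))"
    by (auto simp: F_def G_def fun_eq_iff)
  then show ?thesis using sums_add[OF 1 2] by simp
qed

lemma mod3_sums:
  fixes v :: "nat \<Rightarrow> 'a::real_normed_vector"
  assumes "v sums b"
  shows "(\<lambda>k. if k mod 3 = 2 then v (k div 3) else 0) sums b"
proof -
  have sm: "strict_mono (\<lambda>m::nat. 3*m+2)" by (auto intro: strict_monoI)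
  have r: "n mod 3 \<noteq> 2" if nr: "n \<notin> range (\<lambda>m. 3*m+2)" for n :: nat
  proof
    assume "n mod 3 = 2"
    then have "n = 3*(n div 3)+2" by presburger
    then show False using nr by blast
  qed
  show ?thesis
  proof -
    have z: "n \<notin> range (\<lambda>m. 3*m+2) \<Longrightarrow> (if n mod 3 = 2 then v (n div 3) else 0) = 0" for n
      using r by auto
    define F where "F k = (if k mod 3 = 2 then v (k div 3) else 0)" for k
    have "(\<lambda>n. F (3*n+2)) sums b \<longleftrightarrow> F sums b"
      by (rule sums_mono_reindex[OF sm]) (use z in \<open>simp add: F_def\<close>)
    moreover have Fv: "F (3*n+2) = v n" for n
    proof -
      have "(3*n+2) mod 3 = 2" "(3*n+2) div 3 = n" by presburger+
      then show ?thesis by (simp add: F_def)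
    qed
    moreover have "(\<lambda>n. F (3*n+2)) = v" using Fv by auto
    ultimately have "F sums b" using assms by simp
    moreover have "F = (\<lambda>k. if k mod 3 = 2 then v (k div 3) else 0)" by (simp add: fun_eq_iff F_def)
    ultimately show ?thesis by simp
  qed
qed

lemma amgm:
  fixes x y a c K :: real
  assumes "0 \<le> x" "0 \<le> y" "0 < a" "0 < c" "a \<le> K * c"
  shows "x * y / c \<le> (x^2 / a + K * (y^2 / c)) / 2"
proof -
  have "0 \<le> (x*c - a*y)^2" by simp
  then have "2*a*c*x*y \<le> x^2*c^2 + a^2*y^2" by (simp add: power2_eq_square algebra_simps)
  then have i1: "x*y/c \<le> (x^2/a + a*y^2/c^2)/2"
    using assms by (simp add: field_simps power2_eq_square)
  have "a*y^2/c^2 \<le> K*c*y^2/c^2"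
    using assms by (intro divide_right_mono mult_right_mono) auto
  also have "\<dots> = K*(y^2/c)" using assms by (simp add: power2_eq_square)
  finally have h2: "a*y^2/c^2 \<le> K*(y^2/c)" .
  have "(x^2/a + a*y^2/c^2)/2 \<le> (x^2/a + K*(y^2/c))/2"
    using h2 by (intro divide_right_mono add_left_mono) auto
  then show ?thesis using i1 by linarith
qed



lemma ineq1:
  fixes \<delta> w W a y :: real
  assumes "0<\<delta>" "\<delta>\<le>w" "0<W" "0\<le>a" "0\<le>y" "a*w \<le> W*y"
  shows "a^2*\<delta>/W^2 \<le> y^2/w"
proof -
  have w: "0 < w" using assms by linarith
  have "a*w/W \<le> y" using assms by (simp add: field_simps)
  moreover have "0 \<le> a*w/W" using assms w by simp
  ultimately have "(a*w/W)^2 \<le> y^2" by (rule power_mono)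
  then have "(a*w/W)^2/w \<le> y^2/w" using w by (simp add: divide_right_mono)
  moreover have "(a*w/W)^2/w = a^2*w/W^2" using w by (simp add: power2_eq_square)
  moreover have "a^2*\<delta>/W^2 \<le> a^2*w/W^2" using assms
    by (intro divide_right_mono mult_left_mono) auto
  ultimately show ?thesis by linarith
qed

lemma ineq2:
  fixes \<delta> w W a y t :: real
  assumes "0<\<delta>" "\<delta>\<le>w" "0<W" "1\<le>t" "0\<le>a" "y*W = t*w*a"
  shows "t*\<delta>*a^2/W^2 \<le> y^2/w"
proof -
  have w: "0 < w" using assms by linarith
  have y: "y = t*w*a/W" using assms by (simp add: field_simps)
  have "y^2/w = t^2*w*a^2/W^2" unfolding y using w by (simp add: power2_eq_square)
  moreover have "t*\<delta> \<le> t^2*w"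
  proof -
    have "t*\<delta> \<le> t*w" using assms by simp
    also have "\<dots> \<le> t^2*w" using assms w by (simp add: power2_eq_square)
    finally show ?thesis .
  qed
  then have "t*\<delta>*a^2/W^2 \<le> t^2*w*a^2/W^2"
    by (intro divide_right_mono mult_right_mono) auto
  ultimately show ?thesis by simp
qed



definition bw :: "(nat \<Rightarrow> real) \<Rightarrow> (nat \<Rightarrow> complex) \<Rightarrow> nat \<Rightarrow> real" where
  "bw \<omega> c n = (cmod (c n))^2 / \<omega> n"

definition hT :: "(nat \<Rightarrow> real) \<Rightarrow> (nat \<Rightarrow> complex) \<Rightarrow> nat \<Rightarrow> complex" where
  "hT \<omega> g j = (if 3 \<le> j \<and> 3 \<le> collatzT j
      then complex_of_real (\<omega> j / \<omega> (collatzT j)) * g (collatzT j) else 0)"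

definition unitv :: "nat \<Rightarrow> nat \<Rightarrow> complex" where
  "unitv i n = (if n = i then 1 else 0)"

lemma Xw_small: "c \<in> Xw \<omega> \<Longrightarrow> n < 3 \<Longrightarrow> c n = 0"
  by (simp add: Xw_def)

lemma Xw_summable: "c \<in> Xw \<omega> \<Longrightarrow> summable (bw \<omega> c)"
  by (simp add: Xw_def bw_def[abs_def])

lemma bw_nonneg:
  assumes pos: "\<forall>n\<ge>1. \<omega> n > 0" and c: "c \<in> Xw \<omega>"
  shows "0 \<le> bw \<omega> c n"
proof (cases "n = 0")
  case True then show ?thesis using Xw_small[OF c, of 0] by (simp add: bw_def)
next
  case False then have "\<omega> n > 0" using pos by simp
  then show ?thesis by (simp add: bw_def)
qed

lemma summable_bwT:
  assumes pos: "\<forall>n\<ge>1. \<omega> n > 0" and g: "g \<in> Xw \<omega>"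
  shows "summable (\<lambda>j. bw \<omega> g (collatzT j))"
proof -
  have s: "summable (bw \<omega> g)" using Xw_summable[OF g] .
  have sm: "strict_mono (\<lambda>m::nat. 3*m+2)" by (auto intro: strict_monoI)
  have s2: "summable (\<lambda>m. bw \<omega> g (3*m+2))"
    using subseq_summable[OF s bw_nonneg[OF pos g] sm] .
  have "(\<lambda>j. if even j then bw \<omega> g (j div 2) else bw \<omega> g (3*(j div 2)+2)) sums (suminf (bw \<omega> g) + suminf (\<lambda>m. bw \<omega> g (3*m+2)))"
    by (rule even_odd_sums) (use s s2 summable_sums in auto)
  moreover have "(\<lambda>j. if even j then bw \<omega> g (j div 2) else bw \<omega> g (3*(j div 2)+2)) = (\<lambda>j. bw \<omega> g (collatzT j))"
  proof
    fix j :: nat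
    show "(if even j then bw \<omega> g (j div 2) else bw \<omega> g (3*(j div 2)+2)) = bw \<omega> g (collatzT j)"
    proof (cases "even j")
      case True then show ?thesis by (auto simp: collatzT_def)
    next
      case False then obtain m where m: "j = 2*m+1" by (metis oddE)
      have "collatzT j = 3*m+2" unfolding m by (rule Todd)
      moreover have "j div 2 = m" using m by simp
      ultimately show ?thesis using False by simp
    qed
  qed
  ultimately show ?thesis by (auto simp: sums_iff)
qed

context
  fixes \<omega> :: "nat \<Rightarrow> real" and K :: real
  assumes pos: "\<forall>n\<ge>1. \<omega> n > 0" and K0: "0 \<le> K"
    and ratio: "\<forall>j\<ge>3. 3 \<le> collatzT j \<longrightarrow> \<omega> j \<le> K * \<omega> (collatzT j)"
begin

lemma hT_in: assumes g: "g \<in> Xw \<omega>" shows "hT \<omega> g \<in> Xw \<omega>"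
proof -
  have bnd: "norm ((cmod (hT \<omega> g j))^2 / \<omega> j) \<le> K * bw \<omega> g (collatzT j)" for j
  proof (cases "3 \<le> j \<and> 3 \<le> collatzT j")
    case True
    let ?t = "collatzT j"
    have wj: "\<omega> j > 0" "\<omega> ?t > 0" using pos True by auto
    have c: "cmod (hT \<omega> g j) = \<omega> j / \<omega> ?t * cmod (g ?t)"
      using True wj by (simp add: hT_def norm_mult norm_divide)
    have "(cmod (hT \<omega> g j))^2 / \<omega> j = \<omega> j * (cmod (g ?t))^2 / (\<omega> ?t)^2"
      unfolding c using wj by (simp add: power2_eq_square field_simps)
    also have "\<dots> \<le> K * \<omega> ?t * (cmod (g ?t))^2 / (\<omega> ?t)^2"
      using ratio True wj by (intro divide_right_mono mult_right_mono) auto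
    also have "\<dots> = K * bw \<omega> g ?t" using wj by (simp add: bw_def power2_eq_square)
    finally show ?thesis using wj by simp
  next
    case False
    then have "hT \<omega> g j = 0" by (auto simp: hT_def)
    then show ?thesis using K0 bw_nonneg[OF pos g] by simp
  qed
  have "summable (\<lambda>j. (cmod (hT \<omega> g j))^2 / \<omega> j)"
    using summable_comparison_test'[of "\<lambda>j. K * bw \<omega> g (collatzT j)" 0 "\<lambda>j. (cmod (hT \<omega> g j))^2 / \<omega> j",
       OF summable_mult[OF summable_bwT[OF pos g], of K] bnd] .
  then show ?thesis by (simp add: Xw_def hT_def)
qed

end



context
  fixes \<omega> :: "nat \<Rightarrow> real" and K :: real
  assumes pos: "\<forall>n\<ge>1. \<omega> n > 0" and K0: "0 \<le> K"
    and ratio: "\<forall>j\<ge>3. 3 \<le> collatzT j \<longrightarrow> \<omega> j \<le> K * \<omega> (collatzT j)"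
begin

lemma adj_identity:
  assumes f: "f \<in> Xw \<omega>" and g: "g \<in> Xw \<omega>"
  shows "winner \<omega> (Top f) g = winner \<omega> f (hT \<omega> g)"
proof -
  define A where "A m = (if 3 \<le> m then f (2*m) * cnj (g m) / complex_of_real (\<omega> m) else 0)" for m
  define B where "B m = (if 1 \<le> m then f (2*m+1) * cnj (g (3*m+2)) / complex_of_real (\<omega> (3*m+2)) else 0)" for m
  have sf: "summable (bw \<omega> f)" and sg: "summable (bw \<omega> g)" using Xw_summable f g by auto
  have nf: "\<And>n. 0 \<le> bw \<omega> f n" and ng: "\<And>n. 0 \<le> bw \<omega> g n" using bw_nonneg[OF pos] f g by auto
  have sm2: "strict_mono (\<lambda>m::nat. 2*m)" by (auto intro: strict_monoI)
  have sm3: "strict_mono (\<lambda>m::nat. 2*m+1)" by (auto intro: strict_monoI)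
  have sm32: "strict_mono (\<lambda>m::nat. 3*m+2)" by (auto intro: strict_monoI)
  have bndA: "norm (A m) \<le> (bw \<omega> f (2*m) + K * bw \<omega> g m) / 2" for m
  proof (cases "3 \<le> m")
    case True
    have w: "0 < \<omega> (2*m)" "0 < \<omega> m" using pos True by auto
    have r: "\<omega> (2*m) \<le> K * \<omega> m" using ratio[rule_format, of "2*m"] True T2[of m] by simp
    have "norm (A m) = cmod (f (2*m)) * cmod (g m) / \<omega> m"
      using True w by (simp add: A_def norm_mult norm_divide)
    also have "\<dots> \<le> ((cmod (f (2*m)))^2 / \<omega> (2*m) + K * ((cmod (g m))^2 / \<omega> m)) / 2"
      by (rule amgm) (use w r in auto)
    finally show ?thesis by (simp add: bw_def)
  next
    case False then show ?thesis using nf ng K0 by (simp add: A_def)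
  qed
  have bndB: "norm (B m) \<le> (bw \<omega> f (2*m+1) + K * bw \<omega> g (3*m+2)) / 2" for m
  proof (cases "1 \<le> m")
    case True
    have w: "0 < \<omega> (2*m+1)" "0 < \<omega> (3*m+2)" using pos True by auto
    have r: "\<omega> (2*m+1) \<le> K * \<omega> (3*m+2)" using ratio[rule_format, of "2*m+1"] True Todd[of m] by simp
    have "norm (B m) = cmod (f (2*m+1)) * cmod (g (3*m+2)) / \<omega> (3*m+2)"
      using True w by (simp add: B_def norm_mult norm_divide)
    also have "\<dots> \<le> ((cmod (f (2*m+1)))^2 / \<omega> (2*m+1) + K * ((cmod (g (3*m+2)))^2 / \<omega> (3*m+2))) / 2"
      by (rule amgm) (use w r in auto)
    finally show ?thesis by (simp add: bw_def)
  next
    case False then show ?thesis using nf ng K0 by (simp add: B_def)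
  qed
  have dA: "summable (\<lambda>m. (bw \<omega> f (2*m) + K * bw \<omega> g m) / 2)"
    by (intro summable_divide summable_add summable_mult subseq_summable[OF sf nf sm2] sg)
  have dB: "summable (\<lambda>m. (bw \<omega> f (2*m+1) + K * bw \<omega> g (3*m+2)) / 2)"
    by (intro summable_divide summable_add summable_mult subseq_summable[OF sf nf sm3] subseq_summable[OF sg ng sm32])
  have sA: "summable A"
    by (rule summable_norm_cancel[OF summable_comparison_test'[of _ 0 "\<lambda>n. norm (A n)", OF dA]]) (use bndA in simp)
  have sB: "summable B"
    by (rule summable_norm_cancel[OF summable_comparison_test'[of _ 0 "\<lambda>n. norm (B n)", OF dB]]) (use bndB in simp)
  have Leq: "(\<lambda>k. Top f k * cnj (g k) / complex_of_real (\<omega> k)) = (\<lambda>k. A k + (if k mod 3 = 2 then B (k div 3) else 0))"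
  proof
    fix k :: nat
    show "Top f k * cnj (g k) / complex_of_real (\<omega> k) = A k + (if k mod 3 = 2 then B (k div 3) else 0)"
    proof (cases "3 \<le> k")
      case False
      then have "k div 3 = 0" by simp
      then show ?thesis using False by (simp add: A_def B_def Top_def)
    next
      case True
      show ?thesis
      proof (cases "k mod 3 = 2")
        case md: True
        define m where "m = k div 3"
        have km: "k = 3*m+2" "1 \<le> m" using md True unfolding m_def by presburger+
        have "B (k div 3) = f (2*(k div 3)+1) * cnj (g k) / complex_of_real (\<omega> k)"
          unfolding m_def[symmetric] using km by (simp add: B_def)
        then show ?thesis using True md by (simp add: Top_eq A_def distrib_right add_divide_distrib)
      next
        case False
        then show ?thesis using True by (simp add: Top_eq A_def)
      qed
    qed
  qed
  have Req: "(\<lambda>j. f j * cnj (hT \<omega> g j) / complex_of_real (\<omega> j)) = (\<lambda>j. if even j then A (j div 2) else B (j div 2))"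
  proof
    fix j :: nat
    show "f j * cnj (hT \<omega> g j) / complex_of_real (\<omega> j) = (if even j then A (j div 2) else B (j div 2))"
    proof (cases "even j")
      case True
      then obtain m where m: "j = 2*m" by (metis evenE)
      show ?thesis
      proof (cases "3 \<le> m")
        case True
        have w: "complex_of_real (\<omega> (2*m)) \<noteq> 0" "complex_of_real (\<omega> m) \<noteq> 0"
        proof -
          have "0 < \<omega> (2*m)" "0 < \<omega> m" using pos True by auto
          then show "complex_of_real (\<omega> (2*m)) \<noteq> 0" "complex_of_real (\<omega> m) \<noteq> 0" by auto
        qed
        have "hT \<omega> g (2*m) = complex_of_real (\<omega> (2*m)) / complex_of_real (\<omega> m) * g m"
          using True by (simp add: hT_def T2 of_real_divide)
        then have c: "cnj (hT \<omega> g (2*m)) = complex_of_real (\<omega> (2*m)) / complex_of_real (\<omega> m) * cnj (g m)" by simp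
        have e: "f (2*m) * (complex_of_real (\<omega> (2*m)) / complex_of_real (\<omega> m) * cnj (g m)) / complex_of_real (\<omega> (2*m))
            = f (2*m) * cnj (g m) / complex_of_real (\<omega> m)" using w by (simp add: field_simps)
        show ?thesis unfolding m c e using True by (simp add: A_def)
      next
        case False
        then have "hT \<omega> g (2*m) = 0" by (simp add: hT_def T2)
        then show ?thesis using m False by (simp add: A_def)
      qed
    next
      case False
      then obtain m where m: "j = 2*m+1" by (metis oddE)
      have jd: "j div 2 = m" using m by simp
      show ?thesis
      proof (cases "1 \<le> m")
        case True
        have w: "complex_of_real (\<omega> (2*m+1)) \<noteq> 0" "complex_of_real (\<omega> (3*m+2)) \<noteq> 0"
        proof -
          have "0 < \<omega> (2*m+1)" "0 < \<omega> (3*m+2)" using pos True by auto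
          then show "complex_of_real (\<omega> (2*m+1)) \<noteq> 0" "complex_of_real (\<omega> (3*m+2)) \<noteq> 0" by auto
        qed
        have "hT \<omega> g (2*m+1) = complex_of_real (\<omega> (2*m+1)) / complex_of_real (\<omega> (3*m+2)) * g (3*m+2)"
          unfolding hT_def Todd using True by (simp add: of_real_divide)
        then have c: "cnj (hT \<omega> g (2*m+1)) = complex_of_real (\<omega> (2*m+1)) / complex_of_real (\<omega> (3*m+2)) * cnj (g (3*m+2))" by simp
        have e: "f (2*m+1) * (complex_of_real (\<omega> (2*m+1)) / complex_of_real (\<omega> (3*m+2)) * cnj (g (3*m+2))) / complex_of_real (\<omega> (2*m+1))
            = f (2*m+1) * cnj (g (3*m+2)) / complex_of_real (\<omega> (3*m+2))" using w by (simp add: field_simps)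
        show ?thesis unfolding m c e using True False jd m by (simp add: B_def)
      next
        case c: False
        then have "m = 0" by simp
        then have "hT \<omega> g j = 0" using m by (simp add: hT_def)
        then show ?thesis using jd False \<open>m = 0\<close> by (simp add: B_def)
      qed
    qed
  qed
  have "(\<lambda>k. Top f k * cnj (g k) / complex_of_real (\<omega> k)) sums (suminf A + suminf B)"
    unfolding Leq by (rule sums_add[OF summable_sums[OF sA] mod3_sums[OF summable_sums[OF sB]]])
  moreover have "(\<lambda>j. f j * cnj (hT \<omega> g j) / complex_of_real (\<omega> j)) sums (suminf A + suminf B)"
    unfolding Req by (rule even_odd_sums[OF summable_sums[OF sA] summable_sums[OF sB]])
  ultimately show ?thesis unfolding winner_def by (simp add: sums_iff)
qed

end


lemma unitv_in:
  assumes "3 \<le> i" shows "unitv i \<in> Xw \<omega>"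
proof -
  have "(\<lambda>n. (cmod (unitv i n))^2 / \<omega> n) = (\<lambda>n. if n = i then 1 / \<omega> i else 0)"
    by (auto simp: unitv_def fun_eq_iff)
  then show ?thesis using assms by (auto simp: Xw_def unitv_def)
qed

lemma winner_unit: "winner \<omega> (unitv i) h = cnj (h i) / complex_of_real (\<omega> i)"
proof -
  have "(\<lambda>n. unitv i n * cnj (h n) / complex_of_real (\<omega> n)) = (\<lambda>n. if n = i then cnj (h i) / complex_of_real (\<omega> i) else 0)"
    by (auto simp: unitv_def fun_eq_iff)
  then show ?thesis unfolding winner_def using sums_single[of i "\<lambda>_. cnj (h i) / complex_of_real (\<omega> i)"]
    by (simp add: sums_iff)
qed

lemma wnorm_unit: "wnorm \<omega> (unitv i) = sqrt (1 / \<omega> i)"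
proof -
  have "(\<lambda>n. (cmod (unitv i n))^2 / \<omega> n) = (\<lambda>n. if n = i then 1 / \<omega> i else 0)"
    by (auto simp: unitv_def fun_eq_iff)
  then show ?thesis unfolding wnorm_def using sums_single[of i "\<lambda>_. 1 / \<omega> i"]
    by (simp add: sums_iff)
qed

lemma Tadj_eq:
  assumes pos: "\<forall>n\<ge>1. \<omega> n > 0" and K0: "0 \<le> K"
    and ratio: "\<forall>j\<ge>3. 3 \<le> collatzT j \<longrightarrow> \<omega> j \<le> K * \<omega> (collatzT j)"
    and g: "g \<in> Xw \<omega>"
  shows "Tadj \<omega> g = hT \<omega> g"
  unfolding Tadj_def
proof (rule the_equality)
  show "hT \<omega> g \<in> Xw \<omega> \<and> (\<forall>f\<in>Xw \<omega>. winner \<omega> (Top f) g = winner \<omega> f (hT \<omega> g))"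
    using hT_in[OF pos K0 ratio g] adj_identity[OF pos K0 ratio _ g] by blast
next
  fix h assume h: "h \<in> Xw \<omega> \<and> (\<forall>f\<in>Xw \<omega>. winner \<omega> (Top f) g = winner \<omega> f h)"
  have hT: "hT \<omega> g \<in> Xw \<omega>" using hT_in[OF pos K0 ratio g] .
  show "h = hT \<omega> g"
  proof
    fix n
    show "h n = hT \<omega> g n"
    proof (cases "n < 3")
      case True then show ?thesis using Xw_small h hT by metis
    next
      case False
      then have u: "unitv n \<in> Xw \<omega>" by (intro unitv_in) simp
      have "winner \<omega> (unitv n) h = winner \<omega> (unitv n) (hT \<omega> g)"
        using h adj_identity[OF pos K0 ratio u g] u by metis
      then have "cnj (h n) / complex_of_real (\<omega> n) = cnj (hT \<omega> g n) / complex_of_real (\<omega> n)"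
        by (simp add: winner_unit)
      moreover have "\<omega> n > 0" using pos False by simp
      ultimately have "cnj (h n) = cnj (hT \<omega> g n)" by simp
      then show ?thesis by simp
    qed
  qed
qed

lemma ratio_from_bounded:
  assumes pos: "\<forall>n\<ge>1. \<omega> n > 0" and tb: "Top_bounded \<omega>"
  shows "\<exists>K\<ge>0. \<forall>j\<ge>3. 3 \<le> collatzT j \<longrightarrow> \<omega> j \<le> K * \<omega> (collatzT j)"
proof -
  obtain C where C: "\<forall>c\<in>Xw \<omega>. Top c \<in> Xw \<omega> \<and> wnorm \<omega> (Top c) \<le> C * wnorm \<omega> c"
    using tb unfolding Top_bounded_def by blast
  have "\<omega> j \<le> C^2 * \<omega> (collatzT j)" if j: "3 \<le> j" "3 \<le> collatzT j" for j
  proof -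
    let ?t = "collatzT j"
    have w: "0 < \<omega> j" "0 < \<omega> ?t" using pos j by auto
    have tu: "Top (unitv j) = unitv ?t"
      using j by (auto simp: Top_unit unitv_def[abs_def] fun_eq_iff)
    have "wnorm \<omega> (Top (unitv j)) \<le> C * wnorm \<omega> (unitv j)"
      using C unitv_in[OF j(1), of \<omega>] by blast
    then have "sqrt (1 / \<omega> ?t) \<le> C * sqrt (1 / \<omega> j)"
      unfolding tu wnorm_unit .
    moreover have "0 \<le> sqrt (1 / \<omega> ?t)" using w by simp
    ultimately have "(sqrt (1 / \<omega> ?t))^2 \<le> (C * sqrt (1 / \<omega> j))^2"
      by (rule power_mono)
    then have "1 / \<omega> ?t \<le> C^2 * (1 / \<omega> j)" using w by (simp add: power_mult_distrib)
    then show ?thesis using w by (simp add: field_simps)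
  qed
  then show ?thesis by (intro exI[of _ "C^2"]) auto
qed



lemma main_empty:
  assumes pos: "\<forall>n\<ge>1. \<omega> n > 0" and dpos: "0 < \<delta>" and lb: "\<forall>n\<ge>1. \<delta> \<le> \<omega> n"
    and K0: "0 \<le> K"
    and ratio: "\<forall>j\<ge>3. 3 \<le> collatzT j \<longrightarrow> \<omega> j \<le> K * \<omega> (collatzT j)"
  shows "point_spectrum_Tadj \<omega> = {}"
proof (rule ccontr)
  assume "point_spectrum_Tadj \<omega> \<noteq> {}"
  then obtain \<mu> g where g: "g \<in> Xw \<omega>" "g \<noteq> (\<lambda>_. 0)" and eig: "Tadj \<omega> g = (\<lambda>n. \<mu> * g n)"
    by (auto simp: point_spectrum_Tadj_def)
  have hTe: "hT \<omega> g i = \<mu> * g i" for i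
    using Tadj_eq[OF pos K0 ratio g(1)] eig by metis
  have R: "g (collatzT i) * complex_of_real (\<omega> i) = \<mu> * complex_of_real (\<omega> (collatzT i)) * g i" for i
  proof (cases "i < 3")
    case True
    then have "g i = 0" "g (collatzT i) = 0" using Xw_small[OF g(1)] Tsmall by auto
    then show ?thesis by simp
  next
    case False
    show ?thesis
    proof (cases "3 \<le> collatzT i")
      case True
      have w: "complex_of_real (\<omega> (collatzT i)) \<noteq> 0" using pos[rule_format, of "collatzT i"] True by auto
      have "complex_of_real (\<omega> i) / complex_of_real (\<omega> (collatzT i)) * g (collatzT i) = \<mu> * g i"
        using hTe[of i] False True by (simp add: hT_def of_real_divide)
      then show ?thesis using w by (simp add: field_simps)
    next
      case c: False
      then have "g (collatzT i) = 0" using Xw_small[OF g(1)] by simp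
      moreover have "\<mu> * g i = 0" using hTe[of i] c by (simp add: hT_def)
      ultimately show ?thesis by auto
    qed
  qed
  obtain k where gk: "g k \<noteq> 0" using g(2) by auto
  have k3: "3 \<le> k" using Xw_small[OF g(1)] gk by (meson not_le)
  have wk: "\<omega> k > 0" using pos k3 by auto
  have sb: "summable (bw \<omega> g)" using Xw_summable[OF g(1)] .
  have nb: "\<And>n. 0 \<le> bw \<omega> g n" using bw_nonneg[OF pos g(1)] .
  have ak: "0 < cmod (g k)" using gk by simp
  define c where "c = \<delta> * (cmod (g k))^2 / (\<omega> k)^2"
  have c0: "0 < c" unfolding c_def using dpos ak wk by simp
  consider "\<mu> = 0" | "cmod \<mu> > 1" | "0 < cmod \<mu> \<and> cmod \<mu> \<le> 1" by force
  then show False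
  proof cases
    case 1
    have "g k * complex_of_real (\<omega> (2*k)) = 0" using R[of "2*k"] 1 by (simp add: T2)
    moreover have "\<omega> (2*k) > 0" using pos k3 by auto
    ultimately show False using gk by simp
  next
    case 2
    have it: "g ((collatzT^^n) k) * complex_of_real (\<omega> k) = \<mu>^n * complex_of_real (\<omega> ((collatzT^^n) k)) * g k" for n
    proof (induction n)
      case 0 then show ?case by (simp add: ac_simps)
    next
      case (Suc n)
      define x where "x = (collatzT^^n) k"
      have IH: "g x * complex_of_real (\<omega> k) = \<mu>^n * complex_of_real (\<omega> x) * g k" using Suc x_def by simp
      have x1: "1 \<le> x" unfolding x_def using Tpow_pos k3 by simp
      have wx: "complex_of_real (\<omega> x) \<noteq> 0" using pos x1 by auto
      have "g (collatzT x) * complex_of_real (\<omega> k) * complex_of_real (\<omega> x)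
          = (g (collatzT x) * complex_of_real (\<omega> x)) * complex_of_real (\<omega> k)" by (simp add: ac_simps)
      also have "\<dots> = \<mu> * complex_of_real (\<omega> (collatzT x)) * (g x * complex_of_real (\<omega> k))"
        using R[of x] by (simp add: ac_simps)
      also have "\<dots> = \<mu> * complex_of_real (\<omega> (collatzT x)) * (\<mu>^n * complex_of_real (\<omega> x) * g k)"
        using IH by simp
      also have "\<dots> = \<mu>^Suc n * complex_of_real (\<omega> (collatzT x)) * g k * complex_of_real (\<omega> x)"
        by (simp add: ac_simps)
      finally have "g (collatzT x) * complex_of_real (\<omega> k) = \<mu>^Suc n * complex_of_real (\<omega> (collatzT x)) * g k"
        using wx by simp
      then show ?case by (simp add: x_def)
    qed
    have bnd: "cmod \<mu> ^ n * c \<le> suminf (bw \<omega> g)" for n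
    proof -
      define x where "x = (collatzT^^n) k"
      have x1: "1 \<le> x" unfolding x_def using Tpow_pos k3 by simp
      have wx: "0 < \<omega> x" "\<delta> \<le> \<omega> x" using pos lb x1 by auto
      have "cmod (g x) * \<omega> k = cmod \<mu> ^ n * \<omega> x * cmod (g k)"
        using arg_cong[OF it[of n], of cmod] wx wk unfolding x_def[symmetric]
        by (simp add: norm_mult norm_power)
      then have "cmod \<mu> ^ n * \<delta> * (cmod (g k))^2 / (\<omega> k)^2 \<le> (cmod (g x))^2 / \<omega> x"
        by (intro ineq2) (use dpos wx wk 2 in \<open>auto intro: one_le_power\<close>)
      also have "\<dots> = bw \<omega> g x" by (simp add: bw_def)
      also have "\<dots> \<le> suminf (bw \<omega> g)"
        using sum_le_suminf[OF sb, of "{x}"] nb by simp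
      finally show ?thesis by (simp add: c_def mult.assoc)
    qed
    obtain n where "suminf (bw \<omega> g) / c < cmod \<mu> ^ n" using real_arch_pow[OF 2] by blast
    then have "suminf (bw \<omega> g) < cmod \<mu> ^ n * c" using c0 by (simp add: field_simps)
    then show False using bnd[of n] by simp
  next
    case 3
    have it: "g k * complex_of_real (\<omega> (2^n*k)) = \<mu>^n * complex_of_real (\<omega> k) * g (2^n*k)" for n
    proof (induction n)
      case 0 then show ?case by (simp add: ac_simps)
    next
      case (Suc n)
      define x where "x = 2^n*k"
      have y: "2^Suc n * k = 2*x" by (simp add: x_def)
      have IH: "g k * complex_of_real (\<omega> x) = \<mu>^n * complex_of_real (\<omega> k) * g x" using Suc x_def by simp
      have x1: "1 \<le> x" unfolding x_def using k3 by simp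
      have wx: "complex_of_real (\<omega> x) \<noteq> 0" using pos x1 by auto
      have Ry: "g x * complex_of_real (\<omega> (2*x)) = \<mu> * complex_of_real (\<omega> x) * g (2*x)"
        using R[of "2*x"] by (simp add: T2)
      have "g k * complex_of_real (\<omega> (2*x)) * complex_of_real (\<omega> x)
          = (g k * complex_of_real (\<omega> x)) * complex_of_real (\<omega> (2*x))" by (simp add: ac_simps)
      also have "\<dots> = \<mu>^n * complex_of_real (\<omega> k) * (g x * complex_of_real (\<omega> (2*x)))"
        using IH by (simp add: ac_simps)
      also have "\<dots> = \<mu>^n * complex_of_real (\<omega> k) * (\<mu> * complex_of_real (\<omega> x) * g (2*x))"
        using Ry by simp
      also have "\<dots> = \<mu>^Suc n * complex_of_real (\<omega> k) * g (2*x) * complex_of_real (\<omega> x)"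
        by (simp add: ac_simps)
      finally have "g k * complex_of_real (\<omega> (2*x)) = \<mu>^Suc n * complex_of_real (\<omega> k) * g (2*x)"
        using wx by simp
      then show ?case unfolding y .
    qed
    have bnd: "c \<le> bw \<omega> g (2^n*k)" for n
    proof -
      define x where "x = 2^n*k"
      have x1: "1 \<le> x" unfolding x_def using k3 by simp
      have wx: "0 < \<omega> x" "\<delta> \<le> \<omega> x" using pos lb x1 by auto
      have e: "cmod (g k) * \<omega> x = cmod \<mu> ^ n * \<omega> k * cmod (g x)"
        using arg_cong[OF it[of n], of cmod] wx wk unfolding x_def[symmetric]
        by (simp add: norm_mult norm_power)
      have "cmod \<mu> ^ n \<le> 1" using 3 by (simp add: power_le_one)
      then have "cmod \<mu> ^ n * (\<omega> k * cmod (g x)) \<le> 1 * (\<omega> k * cmod (g x))"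
        using wk by (intro mult_right_mono) auto
      then have "cmod (g k) * \<omega> x \<le> \<omega> k * cmod (g x)" using e by (simp add: mult.assoc)
      then have "(cmod (g k))^2 * \<delta> / (\<omega> k)^2 \<le> (cmod (g x))^2 / \<omega> x"
        by (intro ineq1) (use dpos wx wk in auto)
      then show ?thesis by (simp add: c_def bw_def x_def mult.commute)
    qed
    obtain N where N: "\<forall>m\<ge>N. norm (bw \<omega> g m - 0) < c"
      using LIMSEQ_D[OF summable_LIMSEQ_zero[OF sb] c0] by blast
    have "N \<le> 2^N" using less_exp[of N] by linarith
    also have "2^N \<le> 2^N*k" using k3 by simp
    finally have "N \<le> 2^N*k" .
    then have "bw \<omega> g (2^N*k) < c" using N nb by fastforce
    then show False using bnd[of N] by simp
  qed
qed



theorem theorem2p7: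
  shows "(\<forall>\<omega> :: nat \<Rightarrow> real.
            (\<forall>n\<ge>1. \<omega> n > 0) \<and> (\<exists>\<delta>>0. \<forall>n\<ge>1. \<omega> n \<ge> \<delta>) \<and> Top_bounded \<omega>
            \<longrightarrow> point_spectrum_Tadj \<omega> = {})
         \<and> point_spectrum_Tadj omega0 = {}"
proof
  show "\<forall>\<omega> :: nat \<Rightarrow> real.
            (\<forall>n\<ge>1. \<omega> n > 0) \<and> (\<exists>\<delta>>0. \<forall>n\<ge>1. \<omega> n \<ge> \<delta>) \<and> Top_bounded \<omega>
            \<longrightarrow> point_spectrum_Tadj \<omega> = {}"
  proof (intro allI impI)
    fix \<omega> :: "nat \<Rightarrow> real"
    assume a: "(\<forall>n\<ge>1. \<omega> n > 0) \<and> (\<exists>\<delta>>0. \<forall>n\<ge>1. \<omega> n \<ge> \<delta>) \<and> Top_bounded \<omega>"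
    then have pos: "\<forall>n\<ge>1. \<omega> n > 0" by blast
    obtain \<delta> where d: "\<delta> > 0" "\<forall>n\<ge>1. \<delta> \<le> \<omega> n" using a by blast
    obtain K where K: "K \<ge> 0" "\<forall>j\<ge>3. 3 \<le> collatzT j \<longrightarrow> \<omega> j \<le> K * \<omega> (collatzT j)"
      using ratio_from_bounded[OF pos] a by blast
    show "point_spectrum_Tadj \<omega> = {}" by (rule main_empty[OF pos d K])
  qed
next
  have pos: "\<forall>n\<ge>1. omega0 n > 0" by (simp add: omega0_def)
  have d: "\<forall>n\<ge>1. 1/pi \<le> omega0 n"
    by (auto simp: omega0_def intro!: divide_right_mono)
  have K: "\<forall>j\<ge>3. 3 \<le> collatzT j \<longrightarrow> omega0 j \<le> 3 * omega0 (collatzT j)"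
  proof (intro allI impI)
    fix j :: nat
    have "j \<le> 2 * collatzT j + 1" by (rule Tbig)
    then have "real j \<le> real (2 * collatzT j + 1)" by (simp only: of_nat_le_iff)
    then have "real j + 1 \<le> 3 * (real (collatzT j) + 1)" by simp
    then show "omega0 j \<le> 3 * omega0 (collatzT j)"
      unfolding omega0_def by (simp add: divide_right_mono)
  qed
  show "point_spectrum_Tadj omega0 = {}"
    by (rule main_empty[OF pos _ d _ K]) auto
qed


end
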